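(* Let $(M,\nabla_0)$ be a hom-connection with respect to a differential graded algebra $\Omega A$, with extensions $\nabla_n:\mathrm{Hom}_A(\Omega^{n+1}A,M)\to\mathrm{Hom}_A(\Omega^nA,M)$, $\nabla_n(f)(\omega)=\nabla_0(f\omega)+(-1)^{n+1}f(d\omega)$. Then for all $n>0$: (a) $\nabla_{n-1}\circ\nabla_n:\mathrm{Hom}_A(\Omega^{n+1}A,M)\to\mathrm{Hom}_A(\Omega^{n-1}A,M)$ is right $A$-linear; (b) with $F=\nabla_0\circ\nabla_1:\mathrm{Hom}_A(\Omega^2A,M)\to M$ and $\Theta_n:\mathrm{Hom}_A(\Omega^{n+1}A,M)\to\mathrm{Hom}_A(\Omega^{n-1}A,\mathrm{Hom}_A(\Omega^2A,M))$ defined by $\Theta_n(f)(\omega_1)(\omega_2)=f(\omega_1\omega_2)$, one has $$\nabla_{n-1}\circ\nabla_n=\mathrm{Hom}_A(\Omega^{n-1}A,F)\circ\Theta_n,$$ i.e. $(\nabla_{n-1}\circ\nabla_n)(f)(\omega_1)=F(\Theta_n(f)(\omega_1))$ for all $f$ and $\omega_1\in\Omega^{n-1}A$.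
   Context: All algebras are associative and unital over a field $k$. $\Omega A=\bigoplus_{n\ge0}\Omega^nA$, $\Omega^0A=A$, is a differential graded algebra with degree-one differential $d$, $d^2=0$, satisfying the graded Leibniz rule. $M$ is a right $A$-module; $\mathrm{Hom}_A$ denotes right $A$-linear maps; $\mathrm{Hom}_A(\Omega^kA,M)$ is a right $A$-module via $(fa)(\omega)=f(a\omega)$, and $\mathrm{Hom}_A(A,M)\cong M$ via $f\mapsto f(1)$. For $\omega\in\Omega^nA$ and $f\in\mathrm{Hom}_A(\Omega^{n+m}A,M)$, $f\omega\in\mathrm{Hom}_A(\Omega^mA,M)$ is $(f\omega)(\omega')=f(\omega\omega')$. A hom-connection is a $k$-linear map $\nabla_0:\mathrm{Hom}_A(\Omega^1A,M)\to M$ with $\nabla_0(fa)=\nabla_0(f)a+f(da)$ for all $f$ and $a\in A$. *)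

theory Defs
  imports Main
begin

text \<open>The total DGA \<Omega>A is modelled as a ring type 'w (associative, unital),
  which is a 'k-algebra via the scalar action sw, together with a grading
  Om n (the homogeneous component of degree n, a k-subspace) and a differential d.
  A = Om 0.  M is an abelian group 'm with a right A-action act; its k-structure
  is the one induced by k -> A, c |-> sw c 1.\<close>

definition k_algebra :: "('k::field \<Rightarrow> 'w::ring_1 \<Rightarrow> 'w) \<Rightarrow> bool" where
  "k_algebra sw \<longleftrightarrow>
     (\<forall>c x y. sw c (x + y) = sw c x + sw c y) \<and>
     (\<forall>c e x. sw (c + e) x = sw c x + sw e x) \<and>
     (\<forall>c e x. sw (c * e) x = sw c (sw e x)) \<and>
     (\<forall>x. sw 1 x = x) \<and>
     (\<forall>c x y. sw c (x * y) = sw c x * y) \<and>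
     (\<forall>c x y. sw c (x * y) = x * sw c y)"

definition dga :: "('k::field \<Rightarrow> 'w::ring_1 \<Rightarrow> 'w) \<Rightarrow> (nat \<Rightarrow> 'w set) \<Rightarrow> ('w \<Rightarrow> 'w) \<Rightarrow> bool" where
  "dga sw Om d \<longleftrightarrow>
     k_algebra sw \<and>
     \<comment> \<open>each Om n is a k-subspace\<close>
     (\<forall>n. 0 \<in> Om n \<and> (\<forall>x\<in>Om n. \<forall>y\<in>Om n. x + y \<in> Om n) \<and> (\<forall>c. \<forall>x\<in>Om n. sw c x \<in> Om n)) \<and>
     \<comment> \<open>\<Omega>A is the direct sum of the Om n\<close>
     (\<forall>w. \<exists>N x. (\<forall>i. x i \<in> Om i) \<and> w = (\<Sum>i<N. x i)) \<and>
     (\<forall>N x. (\<forall>i. x i \<in> Om i) \<longrightarrow> (\<Sum>i<N. x i) = 0 \<longrightarrow> (\<forall>i<N. x i = 0)) \<and>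
     \<comment> \<open>graded algebra\<close>
     1 \<in> Om 0 \<and>
     (\<forall>m n. \<forall>x\<in>Om m. \<forall>y\<in>Om n. x * y \<in> Om (m + n)) \<and>
     \<comment> \<open>degree-one k-linear differential, d^2 = 0, graded Leibniz rule\<close>
     (\<forall>x y. d (x + y) = d x + d y) \<and>
     (\<forall>c x. d (sw c x) = sw c (d x)) \<and>
     (\<forall>n. \<forall>x\<in>Om n. d x \<in> Om (Suc n)) \<and>
     (\<forall>x. d (d x) = 0) \<and>
     (\<forall>n. \<forall>x\<in>Om n. \<forall>y. d (x * y) = d x * y + (-1) ^ n * (x * d y))"

definition right_module :: "(nat \<Rightarrow> 'w::ring_1 set) \<Rightarrow> ('m::ab_group_add \<Rightarrow> 'w \<Rightarrow> 'm) \<Rightarrow> bool" where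
  "right_module Om act \<longleftrightarrow>
     (\<forall>m m'. \<forall>a\<in>Om 0. act (m + m') a = act m a + act m' a) \<and>
     (\<forall>m. \<forall>a\<in>Om 0. \<forall>b\<in>Om 0. act m (a + b) = act m a + act m b) \<and>
     (\<forall>m. \<forall>a\<in>Om 0. \<forall>b\<in>Om 0. act m (a * b) = act (act m a) b) \<and>
     (\<forall>m. act m 1 = m)"

text \<open>Hom_A(Om k, M): right A-linear maps Om k -> M, represented as functions
  on \<Omega>A vanishing outside Om k.\<close>
definition hom :: "(nat \<Rightarrow> 'w::ring_1 set) \<Rightarrow> ('m::ab_group_add \<Rightarrow> 'w \<Rightarrow> 'm) \<Rightarrow> nat \<Rightarrow> ('w \<Rightarrow> 'm) \<Rightarrow> bool" where
  "hom Om act k f \<longleftrightarrow>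
     (\<forall>x\<in>Om k. \<forall>y\<in>Om k. f (x + y) = f x + f y) \<and>
     (\<forall>x\<in>Om k. \<forall>a\<in>Om 0. f (x * a) = act (f x) a) \<and>
     (\<forall>x. x \<notin> Om k \<longrightarrow> f x = 0)"

text \<open>For f in Hom_A(Om (j+k), M) and w in Om j: (f w)(w') = f (w w'), w' in Om k.
  With j = 0 this is the right A-module structure (f a)(w') = f (a w').\<close>
definition hcomp :: "(nat \<Rightarrow> 'w::ring_1 set) \<Rightarrow> nat \<Rightarrow> ('w \<Rightarrow> 'm::zero) \<Rightarrow> 'w \<Rightarrow> ('w \<Rightarrow> 'm)" where
  "hcomp Om k f w = (\<lambda>w'. if w' \<in> Om k then f (w * w') else 0)"

definition hom_connection ::
  "('k::field \<Rightarrow> 'w::ring_1 \<Rightarrow> 'w) \<Rightarrow> (nat \<Rightarrow> 'w set) \<Rightarrow> ('w \<Rightarrow> 'w) \<Rightarrow>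
   ('m::ab_group_add \<Rightarrow> 'w \<Rightarrow> 'm) \<Rightarrow> (('w \<Rightarrow> 'm) \<Rightarrow> 'm) \<Rightarrow> bool" where
  "hom_connection sw Om d act nabla0 \<longleftrightarrow>
     dga sw Om d \<and> right_module Om act \<and>
     \<comment> \<open>k-linearity of nabla0 on Hom_A(Om 1, M)\<close>
     (\<forall>f g. hom Om act 1 f \<longrightarrow> hom Om act 1 g \<longrightarrow>
        nabla0 (\<lambda>x. f x + g x) = nabla0 f + nabla0 g) \<and>
     (\<forall>f c. hom Om act 1 f \<longrightarrow>
        nabla0 (\<lambda>x. act (f x) (sw c 1)) = act (nabla0 f) (sw c 1)) \<and>
     \<comment> \<open>hom-connection Leibniz rule\<close>
     (\<forall>f. hom Om act 1 f \<longrightarrow> (\<forall>a\<in>Om 0. nabla0 (hcomp Om 1 f a) = act (nabla0 f) a + f (d a)))"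

definition sgnm :: "nat \<Rightarrow> 'm::ab_group_add \<Rightarrow> 'm" where
  "sgnm p x = (if even p then x else - x)"

text \<open>The extensions nabla_n : Hom_A(Om (n+1), M) -> Hom_A(Om n, M).
  nabla_0 is nabla0 under the identification Hom_A(A,M) = M; for n > 0,
  nabla_n(f)(w) = nabla0 (f w) + (-1)^(n+1) f (d w).\<close>
fun nabla_ext :: "(nat \<Rightarrow> 'w::ring_1 set) \<Rightarrow> ('w \<Rightarrow> 'w) \<Rightarrow> ('m::ab_group_add \<Rightarrow> 'w \<Rightarrow> 'm) \<Rightarrow>
    (('w \<Rightarrow> 'm) \<Rightarrow> 'm) \<Rightarrow> nat \<Rightarrow> ('w \<Rightarrow> 'm) \<Rightarrow> ('w \<Rightarrow> 'm)" where
  "nabla_ext Om d act nabla0 0 f = (\<lambda>a. if a \<in> Om 0 then act (nabla0 f) a else 0)"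
| "nabla_ext Om d act nabla0 (Suc n) f =
     (\<lambda>w. if w \<in> Om (Suc n) then nabla0 (hcomp Om 1 f w) + sgnm (Suc n + 1) (f (d w)) else 0)"

definition Theta :: "(nat \<Rightarrow> 'w::ring_1 set) \<Rightarrow> nat \<Rightarrow> ('w \<Rightarrow> 'm::zero) \<Rightarrow> 'w \<Rightarrow> ('w \<Rightarrow> 'm)" where
  "Theta Om n f = (\<lambda>w1. if w1 \<in> Om (n - 1) then hcomp Om 2 f w1 else (\<lambda>_. 0))"

definition curv :: "(nat \<Rightarrow> 'w::ring_1 set) \<Rightarrow> ('w \<Rightarrow> 'w) \<Rightarrow> ('m::ab_group_add \<Rightarrow> 'w \<Rightarrow> 'm) \<Rightarrow>
    (('w \<Rightarrow> 'm) \<Rightarrow> 'm) \<Rightarrow> ('w \<Rightarrow> 'm) \<Rightarrow> 'm" where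
  "curv Om d act nabla0 g = nabla0 (nabla_ext Om d act nabla0 1 g)"

end

theory Submission
  imports Defs
begin

locale HC =
  fixes sw :: "'k::field \<Rightarrow> 'w::ring_1 \<Rightarrow> 'w"
    and Om :: "nat \<Rightarrow> 'w set"
    and d :: "'w \<Rightarrow> 'w"
    and act :: "'m::ab_group_add \<Rightarrow> 'w \<Rightarrow> 'm"
    and nabla0 :: "('w \<Rightarrow> 'm) \<Rightarrow> 'm"
  assumes hc: "hom_connection sw Om d act nabla0"
begin

abbreviation "N \<equiv> nabla_ext Om d act nabla0"
abbreviation "H \<equiv> hom Om act"

lemma dga: "dga sw Om d" using hc by (simp add: hom_connection_def)
lemma ka: "k_algebra sw" using dga by (simp add: dga_def)
lemma rm: "right_module Om act" using hc by (simp add: hom_connection_def)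

lemma Om0[simp]: "0 \<in> Om n" using dga by (simp add: dga_def)
lemma Om_add[simp]: "x \<in> Om n \<Longrightarrow> y \<in> Om n \<Longrightarrow> x + y \<in> Om n" using dga by (simp add: dga_def)
lemma Om_sw: "x \<in> Om n \<Longrightarrow> sw c x \<in> Om n" using dga by (simp add: dga_def)
lemma sw_add2: "sw (c + e) x = sw c x + sw e x" using ka unfolding k_algebra_def by blast
lemma sw_one: "sw 1 x = x" using ka unfolding k_algebra_def by blast
lemma sw_zero: "sw 0 x = 0"
proof -
  have "sw (0+0) x = sw 0 x + sw 0 x" by (rule sw_add2)
  then show ?thesis by simp
qed
lemma sw_neg: "sw (-1) x = - x"
proof -
  have "sw (-1 + 1) x = sw (-1) x + sw 1 x" by (rule sw_add2)
  then have "sw (-1) x + x = 0" by (simp add: sw_zero sw_one)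
  then show ?thesis by (simp add: eq_neg_iff_add_eq_0)
qed
lemma Om_neg[simp]: "x \<in> Om n \<Longrightarrow> - x \<in> Om n" using Om_sw[of x n "-1"] sw_neg by simp
lemma Om_mult: "x \<in> Om m \<Longrightarrow> y \<in> Om n \<Longrightarrow> x * y \<in> Om (m + n)" using dga by (simp add: dga_def)
lemma Om_one[simp]: "1 \<in> Om 0" using dga by (simp add: dga_def)
lemma d_add: "d (x + y) = d x + d y" using dga by (simp add: dga_def)
lemma d_Om: "x \<in> Om n \<Longrightarrow> d x \<in> Om (Suc n)" using dga by (simp add: dga_def)
lemma dd[simp]: "d (d x) = 0" using dga by (simp add: dga_def)
lemma leib: "x \<in> Om n \<Longrightarrow> d (x * y) = d x * y + (-1) ^ n * (x * d y)" using dga by (simp add: dga_def)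

lemma act_add: "a \<in> Om 0 \<Longrightarrow> act (m + m') a = act m a + act m' a" using rm by (simp add: right_module_def)
lemma act_mult: "a \<in> Om 0 \<Longrightarrow> b \<in> Om 0 \<Longrightarrow> act m (a * b) = act (act m a) b" using rm by (simp add: right_module_def)
lemma act_one: "act m 1 = m" using rm by (simp add: right_module_def)
lemma act_zero: "a \<in> Om 0 \<Longrightarrow> act 0 a = 0"
  using act_add[of a 0 0] by simp
lemma act_neg: "a \<in> Om 0 \<Longrightarrow> act (- m) a = - act m a"
  using act_add[of a m "-m"] act_zero[of a] by (simp add: eq_neg_iff_add_eq_0 add.commute)

lemma nab_add: "H 1 f \<Longrightarrow> H 1 g \<Longrightarrow> nabla0 (\<lambda>x. f x + g x) = nabla0 f + nabla0 g"
  using hc by (simp add: hom_connection_def)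
lemma nab_leib: "H 1 f \<Longrightarrow> a \<in> Om 0 \<Longrightarrow> nabla0 (hcomp Om 1 f a) = act (nabla0 f) a + f (d a)"
  using hc by (simp add: hom_connection_def)

lemma hom_add: "H k f \<Longrightarrow> x \<in> Om k \<Longrightarrow> y \<in> Om k \<Longrightarrow> f (x + y) = f x + f y"
  by (simp add: hom_def)
lemma hom_act: "H k f \<Longrightarrow> x \<in> Om k \<Longrightarrow> a \<in> Om 0 \<Longrightarrow> f (x * a) = act (f x) a"
  by (simp add: hom_def)
lemma hom_out: "H k f \<Longrightarrow> x \<notin> Om k \<Longrightarrow> f x = 0"
  by (simp add: hom_def)
lemma hom_zero[simp]: "H k f \<Longrightarrow> f 0 = 0"
  using hom_add[of k f 0 0] by simp
lemma hom_neg: "H k f \<Longrightarrow> x \<in> Om k \<Longrightarrow> f (- x) = - f x"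
  using hom_add[of k f x "-x"] by (simp add: eq_neg_iff_add_eq_0 add.commute)

lemma sgnm_simps[simp]:
  "sgnm 0 x = x" "sgnm (Suc (Suc p)) x = sgnm p x" "sgnm (Suc p) x = - sgnm p x"
  by (auto simp: sgnm_def)
lemma sgnm_add: "sgnm p (x + y) = sgnm p x + sgnm p y" by (auto simp: sgnm_def)
lemma sgnm_neg: "sgnm p (- x) = - sgnm p x" by (auto simp: sgnm_def)
lemma sgnm_diff: "sgnm p (x - y) = sgnm p x - sgnm p y" by (auto simp: sgnm_def)
lemma sgnm_sgnm[simp]: "sgnm p (sgnm p x) = x" by (auto simp: sgnm_def)

lemma hom_sgn: "H k f \<Longrightarrow> x \<in> Om k \<Longrightarrow> f ((-1)^p * x) = sgnm p (f x)"
  by (cases "even p") (auto simp: sgnm_def hom_neg)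

lemma H_add: "H k f \<Longrightarrow> H k g \<Longrightarrow> H k (\<lambda>x. f x + g x)"
  unfolding hom_def by (auto simp: act_add algebra_simps)
lemma H_neg: "H k f \<Longrightarrow> H k (\<lambda>x. - f x)"
  unfolding hom_def by (auto simp: act_neg algebra_simps)
lemma H_sgn: "H k f \<Longrightarrow> H k (\<lambda>x. sgnm p (f x))"
  by (cases "even p") (auto simp: sgnm_def H_neg)

lemma hcomp_hom: "H (j + k) f \<Longrightarrow> w \<in> Om j \<Longrightarrow> H k (hcomp Om k f w)"
proof -
  assume f: "H (j + k) f" and w: "w \<in> Om j"
  have m: "x \<in> Om k \<Longrightarrow> a \<in> Om 0 \<Longrightarrow> x * a \<in> Om k" for x a using Om_mult[of x k a 0] by simp
  show ?thesis unfolding hom_def hcomp_def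
    using f w m by (auto simp: distrib_left Om_mult mult.assoc[symmetric] hom_add hom_act)
qed

lemma hcomp_hcomp: "w \<in> Om j \<Longrightarrow> hcomp Om k (hcomp Om (j + k) F x) w = hcomp Om k F (x * w)"
  unfolding hcomp_def by (auto simp: Om_mult mult.assoc)

lemma act_add2: "a \<in> Om 0 \<Longrightarrow> b \<in> Om 0 \<Longrightarrow> act m (a + b) = act m a + act m b"
  using rm by (simp add: right_module_def)
lemma act_sgn: "a \<in> Om 0 \<Longrightarrow> act (sgnm p m) a = sgnm p (act m a)"
  by (auto simp: sgnm_def act_neg)
lemma Om_mult0: "x \<in> Om k \<Longrightarrow> a \<in> Om 0 \<Longrightarrow> x * a \<in> Om k"
  using Om_mult[of x k a 0] by simp
lemma Om_0mult: "a \<in> Om 0 \<Longrightarrow> x \<in> Om k \<Longrightarrow> a * x \<in> Om k"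
  using Om_mult[of a 0 x k] by simp

lemma Om_sgnmult: "z \<in> Om k \<Longrightarrow> (-1)^p * z \<in> Om k"
  by (cases "even p") auto

lemma H_zero: "H k (\<lambda>x. 0)" by (simp add: hom_def act_zero)
lemma nab_zero: "nabla0 (\<lambda>x. 0) = 0"
  using nab_add[OF H_zero H_zero] by simp
lemma nab_neg: "H 1 f \<Longrightarrow> nabla0 (\<lambda>x. - f x) = - nabla0 f"
  using nab_add[of f "\<lambda>x. - f x"] H_neg[of 1 f] nab_zero
  by (simp add: eq_neg_iff_add_eq_0 add.commute)
lemma nab_sgn: "H 1 f \<Longrightarrow> nabla0 (\<lambda>x. sgnm p (f x)) = sgnm p (nabla0 f)"
  by (cases "even p") (auto simp: sgnm_def nab_neg)
lemma nab_lin: "H 1 f \<Longrightarrow> H 1 g \<Longrightarrow> nabla0 (\<lambda>x. f x + sgnm p (g x)) = nabla0 f + sgnm p (nabla0 g)"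
  using nab_add[of f "\<lambda>x. sgnm p (g x)"] H_sgn[of 1 g p] nab_sgn by simp

lemma hcomp_add: "H (j + k) f \<Longrightarrow> x \<in> Om j \<Longrightarrow> y \<in> Om j \<Longrightarrow>
   hcomp Om k f (x + y) = (\<lambda>w. hcomp Om k f x w + hcomp Om k f y w)"
  unfolding hcomp_def by (auto simp: distrib_right Om_mult hom_add)
lemma hcomp_plus: "hcomp Om k (\<lambda>x. (f::'w\<Rightarrow>'m) x + g x) w = (\<lambda>x. hcomp Om k f w x + hcomp Om k g w x)"
  unfolding hcomp_def by (auto simp: fun_eq_iff)
lemma hcomp_minus: "hcomp Om k (\<lambda>x. - (f::'w\<Rightarrow>'m) x) w = (\<lambda>x. - hcomp Om k f w x)"
  unfolding hcomp_def by (auto simp: fun_eq_iff)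
lemma hcomp_sgn: "hcomp Om k (\<lambda>x. sgnm p ((f::'w\<Rightarrow>'m) x)) w = (\<lambda>x. sgnm p (hcomp Om k f w x))"
  unfolding hcomp_def by (auto simp: sgnm_def fun_eq_iff)

lemma N_hom: "H (Suc n) f \<Longrightarrow> H n (N n f)"
proof (cases n)
  case 0
  assume f: "H (Suc n) f"
  show ?thesis using 0 by (auto simp: hom_def act_add2 act_mult Om_mult0)
next
  case (Suc m)
  assume f: "H (Suc n) f"
  have add: "N n f (x + y) = N n f x + N n f y" if x: "x \<in> Om n" and y: "y \<in> Om n" for x y
  proof -
    have h1: "H 1 (hcomp Om 1 f x)" "H 1 (hcomp Om 1 f y)"
      using hcomp_hom[of n 1 f] f x y by auto
    have "hcomp Om 1 f (x + y) = (\<lambda>w. hcomp Om 1 f x w + hcomp Om 1 f y w)"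
      using hcomp_add[of n 1 f x y] f x y by simp
    moreover have "f (d (x + y)) = f (d x) + f (d y)"
      using d_add hom_add[OF f] d_Om x y by simp
    ultimately show ?thesis using Suc x y nab_add[OF h1] by (simp add: sgnm_add)
  qed
  have lin: "N n f (x * a) = act (N n f x) a" if x: "x \<in> Om n" and a: "a \<in> Om 0" for x a
  proof -
    have h1: "H 1 (hcomp Om 1 f x)" using hcomp_hom[of n 1 f] f x by auto
    have xa: "x * a \<in> Om n" using Om_mult0 x a by simp
    have e1: "hcomp Om 1 f (x * a) = hcomp Om 1 (hcomp Om 1 f x) a"
      using hcomp_hcomp[of a 0 1 f x] a by simp
    have da: "d a \<in> Om 1" using d_Om a by simp
    have e2: "nabla0 (hcomp Om 1 f (x * a)) = act (nabla0 (hcomp Om 1 f x)) a + f (x * d a)"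
      unfolding e1 using nab_leib[OF h1 a] da by (simp add: hcomp_def)
    have dx: "d x \<in> Om (Suc n)" using d_Om x by simp
    have xda: "x * d a \<in> Om (Suc n)" using Om_mult[OF x da] by simp
    have dxa: "d x * a \<in> Om (Suc n)" using Om_mult0[OF dx a] .
    have e3: "f (d (x * a)) = act (f (d x)) a + sgnm n (f (x * d a))"
      using leib[OF x, of a] hom_add[OF f dxa Om_sgnmult[OF xda]] hom_sgn[OF f xda] hom_act[OF f dx a]
      by simp
    show ?thesis using Suc x xa e2 e3
      by (simp add: act_add act_sgn a sgnm_add sgnm_neg sgnm_diff)
  qed
  show ?thesis unfolding hom_def using add lin by (simp add: Suc)
qed

lemma sgnm_comm: "sgnm q (sgnm p y) = sgnm p (sgnm q y)" by (auto simp: sgnm_def)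
lemma sgnm_zero[simp]: "sgnm p 0 = 0" by (auto simp: sgnm_def)

lemma N_add: "H (Suc n) f \<Longrightarrow> H (Suc n) g \<Longrightarrow> N n (\<lambda>x. f x + g x) = (\<lambda>x. N n f x + N n g x)"
proof (cases n)
  case 0
  assume "H (Suc n) f" "H (Suc n) g"
  then show ?thesis using 0 by (auto simp: fun_eq_iff nab_add act_add)
next
  case (Suc m)
  assume f: "H (Suc n) f" and g: "H (Suc n) g"
  have "nabla0 (hcomp Om 1 (\<lambda>x. f x + g x) w) = nabla0 (hcomp Om 1 f w) + nabla0 (hcomp Om 1 g w)"
    if w: "w \<in> Om n" for w
    unfolding hcomp_plus using nab_add hcomp_hom[of n 1 f w] hcomp_hom[of n 1 g w] f g w by simp
  then show ?thesis using Suc by (auto simp: fun_eq_iff sgnm_add)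
qed

lemma N_sgn: "H (Suc n) f \<Longrightarrow> N n (\<lambda>x. sgnm p (f x)) = (\<lambda>x. sgnm p (N n f x))"
proof (cases n)
  case 0
  assume "H (Suc n) f"
  then show ?thesis using 0 by (auto simp: fun_eq_iff nab_sgn act_sgn)
next
  case (Suc m)
  assume f: "H (Suc n) f"
  have "nabla0 (hcomp Om 1 (\<lambda>x. sgnm p (f x)) w) = sgnm p (nabla0 (hcomp Om 1 f w))"
    if w: "w \<in> Om n" for w
    unfolding hcomp_sgn using nab_sgn hcomp_hom[of n 1 f w] f w by simp
  then show ?thesis using Suc by (auto simp: fun_eq_iff sgnm_add sgnm_comm[of p])
qed

lemma N_lin: "H (Suc n) f \<Longrightarrow> H (Suc n) g \<Longrightarrow>
   N n (\<lambda>x. f x + sgnm p (g x)) = (\<lambda>x. N n f x + sgnm p (N n g x))"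
  using N_add[of n f "\<lambda>x. sgnm p (g x)"] H_sgn[of "Suc n" g p] N_sgn[of n g p] by simp

lemma lemA: "H (Suc k) g \<Longrightarrow> a \<in> Om 0 \<Longrightarrow>
  N k (hcomp Om (Suc k) g a) = (\<lambda>w. hcomp Om k (N k g) a w + sgnm k (hcomp Om k g (d a) w))"
proof (cases k)
  case 0
  assume g: "H (Suc k) g" and a: "a \<in> Om 0"
  have g1: "H 1 g" using g 0 by simp
  have da: "d a \<in> Om 1" using d_Om a by simp
  have "act (nabla0 (hcomp Om 1 g a)) b = act (nabla0 g) (a * b) + g (d a * b)" if b: "b \<in> Om 0" for b
    using nab_leib[OF g1 a] act_add[OF b] act_mult[OF a b] hom_act[OF g1 da b] by simp
  then show ?thesis using 0 a by (auto simp: fun_eq_iff hcomp_def Om_mult0)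
next
  case (Suc j)
  assume g: "H (Suc k) g" and a: "a \<in> Om 0"
  have da: "d a \<in> Om 1" using d_Om a by simp
  have "N k (hcomp Om (Suc k) g a) w = hcomp Om k (N k g) a w + sgnm k (hcomp Om k g (d a) w)" for w
  proof (cases "w \<in> Om k")
    case False then show ?thesis using Suc by (simp add: hcomp_def)
  next
    case w: True
    have aw: "a * w \<in> Om k" using Om_0mult[OF a w] .
    have dw: "d w \<in> Om (Suc k)" using d_Om w by simp
    have daw: "d a * w \<in> Om (Suc k)" using Om_mult[OF da w] by simp
    have adw: "a * d w \<in> Om (Suc k)" using Om_0mult[OF a dw] .
    have e1: "hcomp Om 1 (hcomp Om (Suc k) g a) w = hcomp Om 1 g (a * w)"
      using hcomp_hcomp[of w k 1 g a] w by simp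
    have e2: "g (d (a * w)) = g (d a * w) + g (a * d w)"
      using leib[OF a, of w] hom_add[OF g daw adw] by simp
    show ?thesis using Suc w aw dw e1 e2 by (simp add: hcomp_def sgnm_add mult.assoc)
  qed
  then show ?thesis by (simp add: fun_eq_iff)
qed

lemma lemC: "H (Suc (Suc m)) f \<Longrightarrow> b \<in> Om 1 \<Longrightarrow> d b = 0 \<Longrightarrow>
  hcomp Om m (N (Suc m) f) b = N m (hcomp Om (Suc m) f b)"
proof -
  assume f: "H (Suc (Suc m)) f" and b: "b \<in> Om 1" and db: "d b = 0"
  have "hcomp Om m (N (Suc m) f) b w = N m (hcomp Om (Suc m) f b) w" for w
  proof (cases "w \<in> Om m")
    case False then show ?thesis by (cases m) (simp_all add: hcomp_def)
  next
    case w: True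
    have bw: "b * w \<in> Om (Suc m)" using Om_mult[OF b w] by simp
    have dw: "d w \<in> Om (Suc m)" using d_Om w by simp
    have bdw: "b * d w \<in> Om (Suc (Suc m))" using Om_mult[OF b dw] by simp
    have e1: "hcomp Om 1 (hcomp Om (Suc m) f b) w = hcomp Om 1 f (b * w)"
      using hcomp_hcomp[of w m 1 f b] w by simp
    have e2: "f (d (b * w)) = - f (b * d w)"
      using leib[OF b, of w] db hom_neg[OF f bdw] by simp
    have L: "hcomp Om m (N (Suc m) f) b w = nabla0 (hcomp Om 1 f (b * w)) + sgnm m (- f (b * d w))"
      using w bw e2 by (simp add: hcomp_def)
    show ?thesis
    proof (cases m)
      case 0
      have F: "H 1 (hcomp Om 1 f b)" using hcomp_hom[of 1 1 f b] f b 0 by simp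
      have "nabla0 (hcomp Om 1 (hcomp Om 1 f b) w) = act (nabla0 (hcomp Om 1 f b)) w + f (b * d w)"
        using nab_leib[OF F] w 0 dw by (simp add: hcomp_def)
      then show ?thesis using L e1 0 w by simp
    next
      case (Suc j)
      show ?thesis using L e1 Suc w dw by (simp add: hcomp_def sgnm_neg)
    qed
  qed
  then show ?thesis by (simp add: fun_eq_iff)
qed

lemma partC: "H (Suc (Suc m)) f \<Longrightarrow> a \<in> Om 0 \<Longrightarrow>
  N m (N (Suc m) (hcomp Om (Suc (Suc m)) f a)) = hcomp Om m (N m (N (Suc m) f)) a"
proof -
  assume f: "H (Suc (Suc m)) f" and a: "a \<in> Om 0"
  define g where "g = N (Suc m) f"
  have g: "H (Suc m) g" unfolding g_def using N_hom[OF f] .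
  have da: "d a \<in> Om 1" using d_Om a by simp
  have F1: "H (Suc m) (hcomp Om (Suc m) g a)" using hcomp_hom[of 0 "Suc m" g a] g a by simp
  have F2: "H (Suc m) (hcomp Om (Suc m) f (d a))" using hcomp_hom[of 1 "Suc m" f "d a"] f da by simp
  have "N m (N (Suc m) (hcomp Om (Suc (Suc m)) f a))
      = N m (\<lambda>w. hcomp Om (Suc m) g a w + sgnm (Suc m) (hcomp Om (Suc m) f (d a) w))"
    using lemA[OF f a] g_def by simp
  also have "\<dots> = (\<lambda>x. N m (hcomp Om (Suc m) g a) x + sgnm (Suc m) (N m (hcomp Om (Suc m) f (d a)) x))"
    using N_lin[OF F1 F2] .
  also have "\<dots> = (\<lambda>x. hcomp Om m (N m g) a x + sgnm m (hcomp Om m g (d a) x)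
                     + sgnm (Suc m) (hcomp Om m g (d a) x))"
    using lemA[OF g a] lemC[OF f da] g_def by simp
  also have "\<dots> = hcomp Om m (N m g) a" by simp
  finally show ?thesis unfolding g_def .
qed

lemma partD: "H (Suc (Suc m)) f \<Longrightarrow> w1 \<in> Om m \<Longrightarrow>
  N m (N (Suc m) f) w1 = nabla0 (N 1 (hcomp Om 2 f w1))"
proof -
  assume f: "H (Suc (Suc m)) f" and w1: "w1 \<in> Om m"
  define g where "g = N (Suc m) f"
  have g: "H (Suc m) g" unfolding g_def using N_hom[OF f] .
  have dw1: "d w1 \<in> Om (Suc m)" using d_Om w1 by simp
  have F2: "H 1 (hcomp Om 1 f (d w1))" using hcomp_hom[of "Suc m" 1 f "d w1"] f dw1 by simp
  have gd: "g (d w1) = nabla0 (hcomp Om 1 f (d w1))"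
    using dw1 f unfolding g_def by simp
  have fw: "H 2 (hcomp Om 2 f w1)" using hcomp_hom[of m 2 f w1] f w1 by simp
  show ?thesis
  proof (cases m)
    case 0
    have f2: "H (Suc 1) f" using f 0 by simp
    have G: "H 1 (hcomp Om 1 (N 1 f) w1)" using hcomp_hom[of 0 1 "N 1 f" w1] N_hom[OF f2] w1 0 by simp
    have "nabla0 (N 1 (hcomp Om 2 f w1))
        = nabla0 (\<lambda>w. hcomp Om 1 (N 1 f) w1 w + sgnm 1 (hcomp Om 1 f (d w1) w))"
      using lemA[OF f2, of w1] w1 0 by (simp add: numeral_2_eq_2)
    also have "\<dots> = nabla0 (hcomp Om 1 (N 1 f) w1) + sgnm 1 (nabla0 (hcomp Om 1 f (d w1)))"
      using nab_lin[OF G F2] .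
    also have "\<dots> = act (nabla0 (N 1 f)) w1"
      using nab_leib[OF N_hom[OF f2], of w1] w1 0 gd g_def by simp
    finally show ?thesis using 0 w1 g_def by simp
  next
    case (Suc j)
    have G1: "H 1 (N 1 (hcomp Om 2 f w1))" using N_hom[of 1] fw by (simp add: numeral_2_eq_2)
    have e: "hcomp Om 1 g w1 = (\<lambda>w. N 1 (hcomp Om 2 f w1) w + sgnm m (hcomp Om 1 f (d w1) w))"
    proof
      fix w
      show "hcomp Om 1 g w1 w = N 1 (hcomp Om 2 f w1) w + sgnm m (hcomp Om 1 f (d w1) w)"
      proof (cases "w \<in> Om 1")
        case False then show ?thesis by (simp add: hcomp_def)
      next
        case w: True
        have w1w: "w1 * w \<in> Om (Suc m)" using Om_mult[OF w1 w] by simp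
        have dw: "d w \<in> Om 2" using d_Om w by (simp add: numeral_2_eq_2)
        have w1dw: "w1 * d w \<in> Om (Suc (Suc m))" using Om_mult[OF w1 dw] by simp
        have dw1w: "d w1 * w \<in> Om (Suc (Suc m))" using Om_mult[OF dw1 w] by simp
        have e1: "hcomp Om 1 (hcomp Om 2 f w1) w = hcomp Om 1 f (w1 * w)"
          using hcomp_hcomp[of w 1 1 f w1] w by (simp add: numeral_2_eq_2)
        have e2: "f (d (w1 * w)) = f (d w1 * w) + sgnm m (f (w1 * d w))"
          using leib[OF w1, of w] hom_add[OF f dw1w Om_sgnmult[OF w1dw]] hom_sgn[OF f w1dw] by simp
        have L: "hcomp Om 1 g w1 w = nabla0 (hcomp Om 1 f (w1 * w)) + sgnm m (f (d (w1 * w)))"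
          using w w1w unfolding g_def by (simp add: hcomp_def)
        have R: "N 1 (hcomp Om 2 f w1) w = nabla0 (hcomp Om 1 f (w1 * w)) + f (w1 * d w)"
          using w e1 dw by (simp add: hcomp_def)
        show ?thesis using L R e2 w by (simp add: hcomp_def sgnm_add)
      qed
    qed
    have "N m g w1 = nabla0 (hcomp Om 1 g w1) + sgnm (Suc m) (g (d w1))"
      using Suc w1 by simp
    also have "\<dots> = nabla0 (N 1 (hcomp Om 2 f w1))"
      unfolding e nab_lin[OF G1 F2] gd by simp
    finally show ?thesis unfolding g_def .
  qed
qed

end

theorem proposition3p3:
  fixes sw :: "'k::field \<Rightarrow> 'w::ring_1 \<Rightarrow> 'w"
    and Om :: "nat \<Rightarrow> 'w set"
    and d :: "'w \<Rightarrow> 'w"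
    and act :: "'m::ab_group_add \<Rightarrow> 'w \<Rightarrow> 'm"
    and nabla0 :: "('w \<Rightarrow> 'm) \<Rightarrow> 'm"
    and n :: nat
  assumes hc: "hom_connection sw Om d act nabla0"
    and n: "n > 0"
  shows "(\<forall>f. hom Om act (n + 1) f \<longrightarrow>
            hom Om act (n - 1) (nabla_ext Om d act nabla0 (n - 1) (nabla_ext Om d act nabla0 n f))) \<and>
         (\<forall>f g. hom Om act (n + 1) f \<longrightarrow> hom Om act (n + 1) g \<longrightarrow>
            nabla_ext Om d act nabla0 (n - 1) (nabla_ext Om d act nabla0 n (\<lambda>x. f x + g x)) =
            (\<lambda>x. nabla_ext Om d act nabla0 (n - 1) (nabla_ext Om d act nabla0 n f) x +
                 nabla_ext Om d act nabla0 (n - 1) (nabla_ext Om d act nabla0 n g) x)) \<and>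
         (\<forall>f. hom Om act (n + 1) f \<longrightarrow> (\<forall>a\<in>Om 0.
            nabla_ext Om d act nabla0 (n - 1) (nabla_ext Om d act nabla0 n (hcomp Om (n + 1) f a)) =
            hcomp Om (n - 1) (nabla_ext Om d act nabla0 (n - 1) (nabla_ext Om d act nabla0 n f)) a)) \<and>
         (\<forall>f. hom Om act (n + 1) f \<longrightarrow> (\<forall>w1\<in>Om (n - 1).
            nabla_ext Om d act nabla0 (n - 1) (nabla_ext Om d act nabla0 n f) w1 =
            curv Om d act nabla0 (Theta Om n f w1)))"
proof -
  interpret HC sw Om d act nabla0 using hc by unfold_locales
  obtain m where m: "n = Suc m" using n by (cases n) auto
  have A: "hom Om act (n + 1) f \<Longrightarrow>
            hom Om act (n - 1) (nabla_ext Om d act nabla0 (n - 1) (nabla_ext Om d act nabla0 n f))" for f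
    using N_hom[of m] N_hom[of "Suc m"] m by simp
  have B: "hom Om act (n + 1) f \<Longrightarrow> hom Om act (n + 1) g \<Longrightarrow>
            nabla_ext Om d act nabla0 (n - 1) (nabla_ext Om d act nabla0 n (\<lambda>x. f x + g x)) =
            (\<lambda>x. nabla_ext Om d act nabla0 (n - 1) (nabla_ext Om d act nabla0 n f) x +
                 nabla_ext Om d act nabla0 (n - 1) (nabla_ext Om d act nabla0 n g) x)" for f g
    using N_add[of "Suc m" f g] N_add[of m "N (Suc m) f" "N (Suc m) g"] N_hom[of "Suc m"] m by simp
  have C: "hom Om act (n + 1) f \<Longrightarrow> a \<in> Om 0 \<Longrightarrow>
            nabla_ext Om d act nabla0 (n - 1) (nabla_ext Om d act nabla0 n (hcomp Om (n + 1) f a)) =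
            hcomp Om (n - 1) (nabla_ext Om d act nabla0 (n - 1) (nabla_ext Om d act nabla0 n f)) a" for f a
    using partC[of m f a] m by simp
  have D: "hom Om act (n + 1) f \<Longrightarrow> w1 \<in> Om (n - 1) \<Longrightarrow>
            nabla_ext Om d act nabla0 (n - 1) (nabla_ext Om d act nabla0 n f) w1 =
            curv Om d act nabla0 (Theta Om n f w1)" for f w1
    using partD[of m f w1] m by (simp add: curv_def Theta_def)
  show ?thesis using A B C D by blast
qed

end
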